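(* Let $(\mathcal V,[\cdot,\cdots,\cdot],S)$ be a generalized metric $n$-Leibniz algebra. Define the bilinear form $B$ on $\otimes^{n-1}\mathcal V$ by (bilinear extension of) $$B(u_1\otimes\cdots\otimes u_{n-1},v_1\otimes\cdots\otimes v_{n-1})=S([u_1,\dots,u_{n-1},v_1],v_2,\dots,v_{n-1}).$$ Then $B$ is symmetric and associative-invariant with respect to the bracket $[\cdot,\cdot]_{\mathsf F}$, i.e. $B(U,[V,W]_{\mathsf F})=B([U,V]_{\mathsf F},W)$ for all $U,V,W\in\otimes^{n-1}\mathcal V$.
   Context: All vector spaces are finite-dimensional over $\mathbb R$. An $n$-Leibniz algebra is a vector space $\mathcal V$ with an $n$-linear map $[\cdot,\cdots,\cdot]$ satisfying $[u_1,\dots,u_{n-1},[v_1,\dots,v_n]]=\sum_{i=1}^n[v_1,\dots,[u_1,\dots,u_{n-1},v_i],\dots,v_n]$. A symmetric $S\in\mathrm{Sym}^{n-1}(\mathcal V^* )$ is non-degenerate if $S(u,v_1,\dots,v_{n-2})=0$ for all $v_j$ implies $u=0$. A generalized metric $n$-Leibniz algebra is an $n$-Leibniz algebra with a symmetric non-degenerate $S\in\mathrm{Sym}^{n-1}(\mathcal V^* )$ satisfying (a) unitarity: $\sum_{i=1}^{n-1}S(v_1,\dots,[u_1,\dots,u_{n-1},v_i],\dots,v_{n-1})=0$ and (b) symmetry: $S([u_1,\dots,u_{n-1},v_1],v_2,\dots,v_{n-1})=S([v_1,\dots,v_{n-1},u_1],u_2,\dots,u_{n-1})$. The bracket on $\otimes^{n-1}\mathcal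 V$ is defined on decomposables $U=u_1\otimes\cdots\otimes u_{n-1}$, $V=v_1\otimes\cdots\otimes v_{n-1}$ by $[U,V]_{\mathsf F}=\sum_{i=1}^{n-1}v_1\otimes\cdots\otimes v_{i-1}\otimes[u_1,\dots,u_{n-1},v_i]\otimes v_{i+1}\otimes\cdots\otimes v_{n-1}$ and extended bilinearly; $(\otimes^{n-1}\mathcal V,[\cdot,\cdot]_{\mathsf F})$ is a Leibniz algebra. *)

theory Defs
  imports "HOL-Analysis.Analysis" "HOL-Library.Multiset"
begin

text \<open>An m-ary map on V is modelled as a function on lists; only lists of length m matter.\<close>

definition multilinear_on :: "nat \<Rightarrow> ('v::real_vector list \<Rightarrow> 'b::real_vector) \<Rightarrow> bool" where
  "multilinear_on m f \<longleftrightarrow>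
     (\<forall>xs i. length xs = m \<and> i < m \<longrightarrow> linear (\<lambda>x. f (xs[i := x])))"

definition symmetric_on :: "nat \<Rightarrow> ('v list \<Rightarrow> 'b) \<Rightarrow> bool" where
  "symmetric_on m f \<longleftrightarrow>
     (\<forall>xs ys. length xs = m \<and> mset ys = mset xs \<longrightarrow> f ys = f xs)"

definition n_leibniz :: "nat \<Rightarrow> ('v::real_vector list \<Rightarrow> 'v) \<Rightarrow> bool" where
  "n_leibniz n br \<longleftrightarrow> multilinear_on n br \<and>
     (\<forall>us vs. length us = n - 1 \<and> length vs = n \<longrightarrow>
        br (us @ [br vs]) = (\<Sum>i<n. br (vs[i := br (us @ [vs ! i])])))"

definition nondegenerate :: "nat \<Rightarrow> ('v::real_vector list \<Rightarrow> real) \<Rightarrow> bool" where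
  "nondegenerate n S \<longleftrightarrow>
     (\<forall>u. (\<forall>vs. length vs = n - 2 \<longrightarrow> S (u # vs) = 0) \<longrightarrow> u = 0)"

definition generalized_metric_n_leibniz ::
  "nat \<Rightarrow> ('v::real_vector list \<Rightarrow> 'v) \<Rightarrow> ('v list \<Rightarrow> real) \<Rightarrow> bool" where
  "generalized_metric_n_leibniz n br S \<longleftrightarrow>
     n_leibniz n br \<and> multilinear_on (n - 1) S \<and> symmetric_on (n - 1) S \<and>
     nondegenerate n S \<and>
     (\<forall>us vs. length us = n - 1 \<and> length vs = n - 1 \<longrightarrow>
        (\<Sum>i<n - 1. S (vs[i := br (us @ [vs ! i])])) = 0) \<and>
     (\<forall>us vs. length us = n - 1 \<and> length vs = n - 1 \<longrightarrow>
        S (br (us @ [hd vs]) # tl vs) = S (br (vs @ [hd us]) # tl us))"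

text \<open>Tensor power \<open>\<otimes>^k V\<close> for a finite-dimensional space V (= a euclidean_space type),
  represented by coordinates with respect to the tensor basis
  \<open>e_{i_1} \<otimes> ... \<otimes> e_{i_k}\<close>, indexed by lists of basis vectors of length k.\<close>

definition basis_lists :: "nat \<Rightarrow> 'v::euclidean_space list set" where
  "basis_lists k = {is. length is = k \<and> set is \<subseteq> Basis}"

definition tensors :: "nat \<Rightarrow> ('v::euclidean_space list \<Rightarrow> real) set" where
  "tensors k = {T. \<forall>is. is \<notin> basis_lists k \<longrightarrow> T is = 0}"

definition dec_tensor :: "'v::euclidean_space list \<Rightarrow> ('v list \<Rightarrow> real)" where
  "dec_tensor us = (\<lambda>is. if is \<in> basis_lists (length us)
       then (\<Prod>j<length us. (us ! j) \<bullet> (is ! j)) else 0)"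

definition bracketF_dec :: "nat \<Rightarrow> ('v::euclidean_space list \<Rightarrow> 'v) \<Rightarrow> 'v list \<Rightarrow> 'v list \<Rightarrow> ('v list \<Rightarrow> real)" where
  "bracketF_dec n br us vs =
     (\<lambda>ks. \<Sum>i<n - 1. dec_tensor (vs[i := br (us @ [vs ! i])]) ks)"

definition bracketF :: "nat \<Rightarrow> ('v::euclidean_space list \<Rightarrow> 'v) \<Rightarrow>
     ('v list \<Rightarrow> real) \<Rightarrow> ('v list \<Rightarrow> real) \<Rightarrow> ('v list \<Rightarrow> real)" where
  "bracketF n br U V =
     (\<lambda>ks. \<Sum>is\<in>basis_lists (n - 1). \<Sum>js\<in>basis_lists (n - 1).
        U is * V js * bracketF_dec n br is js ks)"

definition formB_dec :: "('v list \<Rightarrow> 'v) \<Rightarrow> ('v list \<Rightarrow> real) \<Rightarrow> 'v list \<Rightarrow> 'v list \<Rightarrow> real" where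
  "formB_dec br S us vs = S (br (us @ [hd vs]) # tl vs)"

definition formB :: "nat \<Rightarrow> ('v::euclidean_space list \<Rightarrow> 'v) \<Rightarrow> ('v list \<Rightarrow> real) \<Rightarrow>
     ('v list \<Rightarrow> real) \<Rightarrow> ('v list \<Rightarrow> real) \<Rightarrow> real" where
  "formB n br S U V =
     (\<Sum>is\<in>basis_lists (n - 1). \<Sum>js\<in>basis_lists (n - 1).
        U is * V js * formB_dec br S is js)"

end

theory Submission
  imports Defs
begin

lemma finite_bl: "finite (basis_lists k :: 'v::euclidean_space list set)"
  unfolding basis_lists_def using finite_lists_length_eq[OF finite_Basis, of k]
  by (simp add: conj_commute)

lemma bl_Suc: "basis_lists (Suc k) = (\<lambda>(b,js). b # js) ` (Basis \<times> basis_lists k)"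
  unfolding basis_lists_def
  by (auto simp: length_Suc_conv image_iff)

lemma dec_cons:
  assumes "b \<in> Basis" "js \<in> basis_lists (length X)"
  shows "dec_tensor (x # X) (b # js) = (x \<bullet> b) * dec_tensor X js"
proof -
  have "b # js \<in> basis_lists (length (x # X))" using assms by (auto simp: basis_lists_def)
  then show ?thesis using assms unfolding dec_tensor_def
    by (simp only: if_True length_Cons prod.lessThan_Suc_shift) simp
qed

lemma ml_cons:
  assumes "multilinear_on (Suc k) f"
  shows "multilinear_on k (\<lambda>js. f (b # js))"
  unfolding multilinear_on_def
proof (intro allI impI)
  fix xs :: "'a list" and i assume h: "length xs = k \<and> i < k"
  have "linear (\<lambda>x. f ((b # xs)[Suc i := x]))"
    using assms h unfolding multilinear_on_def by (metis Suc_less_eq length_Cons)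
  then show "linear (\<lambda>x. f (b # xs[i := x]))" by simp
qed

lemma expand:
  fixes f :: "'v::euclidean_space list \<Rightarrow> real"
  assumes "multilinear_on k f" "length X = k"
  shows "(\<Sum>js\<in>basis_lists k. dec_tensor X js * f js) = f X"
  using assms
proof (induction k arbitrary: f X)
  case 0
  then have "basis_lists 0 = {[] :: 'v list}" by (auto simp: basis_lists_def)
  with 0 show ?case by (simp add: dec_tensor_def)
next
  case (Suc k)
  then obtain x X' where X: "X = x # X'" and lX: "length X' = k" by (auto simp: length_Suc_conv)
  have inj: "inj_on (\<lambda>(b,js). b # js) (Basis \<times> basis_lists k)" by (auto simp: inj_on_def)
  have "(\<Sum>js\<in>basis_lists (Suc k). dec_tensor X js * f js)
      = (\<Sum>(b,js)\<in>Basis \<times> basis_lists k. dec_tensor X (b # js) * f (b # js))"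
    unfolding bl_Suc by (subst sum.reindex[OF inj]) (simp add: case_prod_beta)
  also have "\<dots> = (\<Sum>b\<in>Basis. \<Sum>js\<in>basis_lists k. dec_tensor X (b # js) * f (b # js))"
    by (rule sum.cartesian_product[symmetric])
  also have "\<dots> = (\<Sum>b\<in>Basis. (x \<bullet> b) * (\<Sum>js\<in>basis_lists k. dec_tensor X' js * f (b # js)))"
    by (auto intro!: sum.cong simp: X dec_cons lX sum_distrib_left mult_ac)
  also have "\<dots> = (\<Sum>b\<in>Basis. (x \<bullet> b) * f (b # X'))"
    using Suc.IH[OF ml_cons[OF Suc.prems(1)] lX] by simp
  also have "\<dots> = f (x # X')"
  proof -
    have lin: "linear (\<lambda>y. f ((x # X')[0 := y]))"
      using Suc.prems unfolding multilinear_on_def by (metis X zero_less_Suc)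
    have "f (x # X') = (\<lambda>y. f ((x # X')[0 := y])) (\<Sum>b\<in>Basis. (x \<bullet> b) *\<^sub>R b)"
      by (simp add: euclidean_representation)
    also have "\<dots> = (\<Sum>b\<in>Basis. (x \<bullet> b) * f ((x # X')[0 := b]))"
      by (simp add: linear_sum[OF lin] linear_scale[OF lin] del: list_update.simps)
    finally show ?thesis by simp
  qed
  finally show ?case by (simp add: X)
qed

lemma lin_slot:
  assumes "multilinear_on m f" "length xs = m" "i < m"
  shows "linear (\<lambda>x. f (xs[i := x]))"
  using assms unfolding multilinear_on_def by blast

lemma ml_right:
  fixes br :: "'v::euclidean_space list \<Rightarrow> 'v" and S :: "'v list \<Rightarrow> real"
  assumes n2: "2 \<le> n" and brml: "multilinear_on n br" and Sml: "multilinear_on (n - 1) S"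
    and lis: "length is = n - 1"
  shows "multilinear_on (n - 1) (\<lambda>js. formB_dec br S is js)"
  unfolding multilinear_on_def
proof (intro allI impI)
  fix xs :: "'v list" and i assume h: "length xs = n - 1 \<and> i < n - 1"
  then obtain y ys where xs: "xs = y # ys" using n2 by (cases xs) auto
  show "linear (\<lambda>x. formB_dec br S is (xs[i := x]))"
  proof (cases i)
    case 0
    have l1: "linear (\<lambda>x. br ((is @ [y])[n - 1 := x]))"
      by (rule lin_slot[OF brml]) (use lis n2 in auto)
    have l2: "linear (\<lambda>x. S ((br (is @ [y]) # ys)[0 := x]))"
      by (rule lin_slot[OF Sml]) (use h xs n2 in auto)
    have "linear ((\<lambda>x. S ((br (is @ [y]) # ys)[0 := x])) \<circ> (\<lambda>x. br ((is @ [y])[n - 1 := x])))"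
      by (rule linear_compose[OF l1 l2])
    moreover have "\<And>x. (is @ [y])[n - 1 := x] = is @ [x]" using lis by (simp add: list_update_append)
    ultimately show ?thesis using 0 by (simp add: xs formB_dec_def o_def)
  next
    case (Suc j)
    have "linear (\<lambda>x. S ((br (is @ [y]) # ys)[Suc j := x]))"
      by (rule lin_slot[OF Sml]) (use h xs Suc in auto)
    then show ?thesis using Suc by (simp add: xs formB_dec_def)
  qed
qed

lemma ml_left:
  fixes br :: "'v::euclidean_space list \<Rightarrow> 'v" and S :: "'v list \<Rightarrow> real"
  assumes n2: "2 \<le> n" and brml: "multilinear_on n br" and Sml: "multilinear_on (n - 1) S"
    and lls: "length ls = n - 1"
  shows "multilinear_on (n - 1) (\<lambda>js. formB_dec br S js ls)"
  unfolding multilinear_on_def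
proof (intro allI impI)
  fix xs :: "'v list" and i assume h: "length xs = n - 1 \<and> i < n - 1"
  have l1: "linear (\<lambda>x. br ((xs @ [hd ls])[i := x]))"
    by (rule lin_slot[OF brml]) (use h n2 in auto)
  have l2: "linear (\<lambda>x. S ((br (xs @ [hd ls]) # tl ls)[0 := x]))"
    by (rule lin_slot[OF Sml]) (use lls n2 in auto)
  have "linear ((\<lambda>x. S ((br (xs @ [hd ls]) # tl ls)[0 := x])) \<circ> (\<lambda>x. br ((xs @ [hd ls])[i := x])))"
    by (rule linear_compose[OF l1 l2])
  moreover have "\<And>x. (xs @ [hd ls])[i := x] = xs[i := x] @ [hd ls]" using h by (simp add: list_update_append)
  ultimately show "linear (\<lambda>x. formB_dec br S (xs[i := x]) ls)" by (simp add: formB_dec_def o_def)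
qed

lemma key:
  fixes br :: "'v::euclidean_space list \<Rightarrow> 'v" and S :: "'v list \<Rightarrow> real"
  assumes n2: "2 \<le> n" and gm: "generalized_metric_n_leibniz n br S"
    and lu: "length u = n - 1" and lv: "length v = n - 1" and lw: "length w = n - 1"
  shows "(\<Sum>i<n - 1. formB_dec br S u (w[i := br (v @ [w ! i])]))
       = (\<Sum>i<n - 1. formB_dec br S (v[i := br (u @ [v ! i])]) w)"
proof -
  define m where "m = n - 1"
  have nm: "n = Suc m" "m \<ge> 1" and nm1: "n - 1 = m" "n - Suc 0 = m" using n2 by (auto simp: m_def)
  from gm have leib: "\<And>us vs. length us = n - 1 \<Longrightarrow> length vs = n \<Longrightarrow>
        br (us @ [br vs]) = (\<Sum>i<n. br (vs[i := br (us @ [vs ! i])]))"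
    and Sml: "multilinear_on (n - 1) S"
    and unit: "\<And>us vs. length us = n - 1 \<Longrightarrow> length vs = n - 1 \<Longrightarrow>
        (\<Sum>i<n - 1. S (vs[i := br (us @ [vs ! i])])) = 0"
    unfolding generalized_metric_n_leibniz_def n_leibniz_def by blast+
  obtain k where mk: "m = Suc k" using nm(2) by (cases m) auto
  obtain w1 w' where w: "w = w1 # w'" using lw nm by (cases w) (auto simp: nm1)
  have lw': "length w' = m - 1" using lw w by (simp add: nm1)
  define c where "c = br (u @ [w1])"
  have S0: "\<And>A a. finite A \<Longrightarrow> S ((\<Sum>i\<in>A. a i) # w') = (\<Sum>i\<in>A. S (a i # w'))"
  proof -
    fix A :: "'x set" and a assume "finite A"
    have lin: "linear (\<lambda>x. S ((0 # w')[0 := x]))"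
      by (rule lin_slot[OF Sml]) (use lw' nm(2) in \<open>auto simp: nm1\<close>)
    show "S ((\<Sum>i\<in>A. a i) # w') = (\<Sum>i\<in>A. S (a i # w'))"
      using linear_sum[OF lin, of a A] by simp
  qed
  have "br (u @ [br (v @ [w1])]) = (\<Sum>i<n. br ((v @ [w1])[i := br (u @ [(v @ [w1]) ! i])]))"
    by (rule leib) (use lu lv n2 in auto)
  also have "\<dots> = (\<Sum>i<m. br (v[i := br (u @ [v ! i])] @ [w1])) + br (v @ [c])"
    using lv by (simp add: nm(1) nm1 list_update_append nth_append c_def)
  finally have L: "br (u @ [br (v @ [w1])]) = (\<Sum>i<m. br (v[i := br (u @ [v ! i])] @ [w1])) + br (v @ [c])" .
  have U: "(\<Sum>i<n - 1. S ((c # w')[i := br (v @ [(c # w') ! i])])) = 0"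
    by (rule unit) (use lv lw' nm(2) in \<open>auto simp: nm1\<close>)
  have U2: "S (br (v @ [c]) # w') + (\<Sum>j<m - 1. S (c # w'[j := br (v @ [w' ! j])])) = 0"
    using U by (simp only: nm1 mk sum.lessThan_Suc_shift) simp
  have "(\<Sum>i<n - 1. formB_dec br S u (w[i := br (v @ [w ! i])]))
      = S (br (u @ [br (v @ [w1])]) # w') + (\<Sum>j<m - 1. S (c # w'[j := br (v @ [w' ! j])]))"
    by (simp only: nm1 mk sum.lessThan_Suc_shift) (simp add: formB_dec_def w c_def)
  also have "S (br (u @ [br (v @ [w1])]) # w') = (\<Sum>i<m. S (br (v[i := br (u @ [v ! i])] @ [w1]) # w')) + S (br (v @ [c]) # w')"
  proof -
    have lin: "linear (\<lambda>x. S ((0 # w')[0 := x]))"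
      by (rule lin_slot[OF Sml]) (use lw' nm(2) in \<open>auto simp: nm1\<close>)
    show ?thesis unfolding L using S0[of "{..<m}"] linear_add[OF lin] by simp
  qed
  finally show ?thesis using U2 by (simp add: nm1 formB_dec_def w)
qed

lemma rearr:
  fixes a :: real
  shows "(\<Sum>j\<in>A. a * (\<Sum>k\<in>B. \<Sum>l\<in>C. b k l * (\<Sum>i\<in>I. d k l i j)) * g j)
       = (\<Sum>k\<in>B. \<Sum>l\<in>C. \<Sum>i\<in>I. a * b k l * (\<Sum>j\<in>A. d k l i j * g j))"
proof -
  have "(\<Sum>j\<in>A. a * (\<Sum>k\<in>B. \<Sum>l\<in>C. b k l * (\<Sum>i\<in>I. d k l i j)) * g j)
      = (\<Sum>j\<in>A. \<Sum>k\<in>B. \<Sum>l\<in>C. \<Sum>i\<in>I. a * b k l * (d k l i j * g j))"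
    by (simp add: sum_distrib_left sum_distrib_right mult_ac)
  also have "\<dots> = (\<Sum>k\<in>B. \<Sum>j\<in>A. \<Sum>l\<in>C. \<Sum>i\<in>I. a * b k l * (d k l i j * g j))"
    by (rule sum.swap)
  also have "\<dots> = (\<Sum>k\<in>B. \<Sum>l\<in>C. \<Sum>j\<in>A. \<Sum>i\<in>I. a * b k l * (d k l i j * g j))"
    by (rule sum.cong[OF refl], rule sum.swap)
  also have "\<dots> = (\<Sum>k\<in>B. \<Sum>l\<in>C. \<Sum>i\<in>I. \<Sum>j\<in>A. a * b k l * (d k l i j * g j))"
    by (rule sum.cong[OF refl], rule sum.cong[OF refl], rule sum.swap)
  also have "\<dots> = (\<Sum>k\<in>B. \<Sum>l\<in>C. \<Sum>i\<in>I. a * b k l * (\<Sum>j\<in>A. d k l i j * g j))"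
    by (simp add: sum_distrib_left)
  finally show ?thesis .
qed

lemma rearr2:
  fixes w :: real
  shows "(\<Sum>j\<in>A. (\<Sum>k\<in>B. \<Sum>l\<in>C. b k l * (\<Sum>i\<in>I. d k l i j)) * w * g j)
       = (\<Sum>k\<in>B. \<Sum>l\<in>C. \<Sum>i\<in>I. b k l * w * (\<Sum>j\<in>A. d k l i j * g j))"
proof -
  have "(\<Sum>j\<in>A. (\<Sum>k\<in>B. \<Sum>l\<in>C. b k l * (\<Sum>i\<in>I. d k l i j)) * w * g j)
     = (\<Sum>j\<in>A. w * (\<Sum>k\<in>B. \<Sum>l\<in>C. b k l * (\<Sum>i\<in>I. d k l i j)) * g j)"
    by (simp add: mult_ac)
  also have "\<dots> = (\<Sum>k\<in>B. \<Sum>l\<in>C. \<Sum>i\<in>I. w * b k l * (\<Sum>j\<in>A. d k l i j * g j))"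
    by (rule rearr)
  finally show ?thesis by (simp add: mult_ac)
qed

theorem mainTheorem6:
  fixes n :: nat
    and br :: "'v::euclidean_space list \<Rightarrow> 'v"
    and S :: "'v list \<Rightarrow> real"
  assumes "2 \<le> n"
    and "generalized_metric_n_leibniz n br S"
  shows "(\<forall>U\<in>tensors (n - 1). \<forall>V\<in>tensors (n - 1). formB n br S U V = formB n br S V U) \<and>
         (\<forall>U\<in>tensors (n - 1). \<forall>V\<in>tensors (n - 1). \<forall>W\<in>tensors (n - 1).
            formB n br S U (bracketF n br V W) = formB n br S (bracketF n br U V) W)"
proof -
  note n2 = assms(1) and gm = assms(2)
  define BL where "BL = (basis_lists (n - 1) :: 'v list set)"
  have fin: "finite BL" unfolding BL_def by (rule finite_bl)
  have lBL: "\<And>x. x \<in> BL \<Longrightarrow> length x = n - 1" by (simp add: BL_def basis_lists_def)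
  from gm have brml: "multilinear_on n br" and Sml: "multilinear_on (n - 1) S"
    and sym: "\<And>us vs. length us = n - 1 \<Longrightarrow> length vs = n - 1 \<Longrightarrow>
        S (br (us @ [hd vs]) # tl vs) = S (br (vs @ [hd us]) # tl us)"
    unfolding generalized_metric_n_leibniz_def n_leibniz_def by blast+
  define fB where "fB = formB_dec br S"
  have P1: "formB n br S U V = formB n br S V U" for U V
  proof -
    have "formB n br S V U = (\<Sum>is\<in>BL. \<Sum>js\<in>BL. V is * U js * fB is js)"
      by (simp add: formB_def BL_def fB_def)
    also have "\<dots> = (\<Sum>js\<in>BL. \<Sum>is\<in>BL. V is * U js * fB is js)" by (rule sum.swap)
    also have "\<dots> = (\<Sum>js\<in>BL. \<Sum>is\<in>BL. U js * V is * fB js is)"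
      by (intro sum.cong refl) (simp add: fB_def formB_dec_def sym lBL)
    finally show ?thesis by (simp add: formB_def BL_def fB_def)
  qed
  have P2: "formB n br S U (bracketF n br V W) = formB n br S (bracketF n br U V) W" for U V W
  proof -
    have "formB n br S U (bracketF n br V W)
       = (\<Sum>ps\<in>BL. \<Sum>js\<in>BL. U ps * (\<Sum>ks\<in>BL. \<Sum>ls\<in>BL. V ks * W ls *
            (\<Sum>i<n - 1. dec_tensor (ls[i := br (ks @ [ls ! i])]) js)) * fB ps js)"
      by (simp only: formB_def bracketF_def bracketF_dec_def BL_def fB_def)
    also have "\<dots> = (\<Sum>ps\<in>BL. \<Sum>ks\<in>BL. \<Sum>ls\<in>BL. \<Sum>i<n - 1. U ps * (V ks * W ls) *
            (\<Sum>js\<in>BL. dec_tensor (ls[i := br (ks @ [ls ! i])]) js * fB ps js))"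
      by (rule sum.cong[OF refl], rule rearr)
    also have "\<dots> = (\<Sum>ps\<in>BL. \<Sum>ks\<in>BL. \<Sum>ls\<in>BL. \<Sum>i<n - 1. U ps * (V ks * W ls) *
            fB ps (ls[i := br (ks @ [ls ! i])]))"
    proof (intro sum.cong refl)
      fix ps ks ls i assume h: "ps \<in> BL" "ks \<in> BL" "ls \<in> BL" "i \<in> {..<n - 1}"
      have "(\<Sum>js\<in>BL. dec_tensor (ls[i := br (ks @ [ls ! i])]) js * fB ps js) = fB ps (ls[i := br (ks @ [ls ! i])])"
        unfolding BL_def fB_def
        by (rule expand[OF ml_right[OF n2 brml Sml]]) (use h lBL in auto)
      then show "U ps * (V ks * W ls) * (\<Sum>js\<in>BL. dec_tensor (ls[i := br (ks @ [ls ! i])]) js * fB ps js)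
         = U ps * (V ks * W ls) * fB ps (ls[i := br (ks @ [ls ! i])])" by simp
    qed
    also have "\<dots> = (\<Sum>ps\<in>BL. \<Sum>ks\<in>BL. \<Sum>ls\<in>BL. U ps * V ks * W ls *
            (\<Sum>i<n - 1. fB ps (ls[i := br (ks @ [ls ! i])])))"
      by (simp add: sum_distrib_left mult_ac)
    also have "\<dots> = (\<Sum>ps\<in>BL. \<Sum>ks\<in>BL. \<Sum>ls\<in>BL. U ps * V ks * W ls *
            (\<Sum>i<n - 1. fB (ks[i := br (ps @ [ks ! i])]) ls))"
      by (intro sum.cong refl, unfold fB_def, subst key[OF n2 gm]) (auto simp: lBL)
    also have "\<dots> = (\<Sum>ls\<in>BL. \<Sum>ps\<in>BL. \<Sum>ks\<in>BL. U ps * V ks * W ls *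
            (\<Sum>i<n - 1. fB (ks[i := br (ps @ [ks ! i])]) ls))"
      by (subst sum.swap, rule sum.cong[OF refl], rule sum.swap)
    also have "\<dots> = (\<Sum>ls\<in>BL. \<Sum>ps\<in>BL. \<Sum>ks\<in>BL. \<Sum>i<n - 1. U ps * V ks * W ls *
            (\<Sum>js\<in>BL. dec_tensor (ks[i := br (ps @ [ks ! i])]) js * fB js ls))"
    proof -
      have "U ps * V ks * W ls * (\<Sum>i<n - 1. fB (ks[i := br (ps @ [ks ! i])]) ls)
         = (\<Sum>i<n - 1. U ps * V ks * W ls *
            (\<Sum>js\<in>BL. dec_tensor (ks[i := br (ps @ [ks ! i])]) js * fB js ls))"
        if h: "ps \<in> BL" "ks \<in> BL" "ls \<in> BL" for ps ks ls
      proof -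
        have "(\<Sum>js\<in>BL. dec_tensor (ks[i := br (ps @ [ks ! i])]) js * fB js ls) = fB (ks[i := br (ps @ [ks ! i])]) ls"
          if "i < n - 1" for i
          unfolding BL_def fB_def
          by (rule expand[OF ml_left[OF n2 brml Sml]]) (use h lBL that in auto)
        then show ?thesis by (simp add: sum_distrib_left)
      qed
      then show ?thesis by (intro sum.cong refl) auto
    qed
    also have "\<dots> = (\<Sum>ls\<in>BL. \<Sum>js\<in>BL. (\<Sum>ps\<in>BL. \<Sum>ks\<in>BL. U ps * V ks *
            (\<Sum>i<n - 1. dec_tensor (ks[i := br (ps @ [ks ! i])]) js)) * W ls * fB js ls)"
      by (rule sum.cong[OF refl], rule rearr2[symmetric])
    also have "\<dots> = (\<Sum>js\<in>BL. \<Sum>ls\<in>BL. (\<Sum>ps\<in>BL. \<Sum>ks\<in>BL. U ps * V ks *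
            (\<Sum>i<n - 1. dec_tensor (ks[i := br (ps @ [ks ! i])]) js)) * W ls * fB js ls)"
      by (rule sum.swap)
    also have "\<dots> = formB n br S (bracketF n br U V) W"
      by (simp only: formB_def bracketF_def bracketF_dec_def BL_def fB_def)
    finally show ?thesis .
  qed
  show ?thesis using P1 P2 by blast
qed
end
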